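(* Let $P_{\mathrm{BS}}^{\max}>0$, $P_{\mathrm{A}}^{\max}>0$, $\sigma^2>0$, $\sigma_v^2>0$, $\varrho_f>0$, $\varrho_g>0$. Let $(f_n)_{n\ge1}$ and $(g_n)_{n\ge1}$ be independent sequences of i.i.d. random variables with $f_n\sim\mathcal{CN}(0,\varrho_f^2)$ and $g_n\sim\mathcal{CN}(0,\varrho_g^2)$. For each $N\ge1$ put $\mathbf f=[f_1,\dots,f_N]^{\mathrm T}$, $\mathbf g=[g_1,\dots,g_N]^{\mathrm T}$, and define the maximal achievable SNR of the active-RIS-aided single-user single-antenna system $$\gamma_{\mathrm{active}}(N)=\sup_{w,\,p,\,\boldsymbol\Theta}\ \frac{|p\,\mathbf f^{\mathrm H}\boldsymbol\Theta\mathbf g\,w|^2}{p^2\|\mathbf f^{\mathrm H}\boldsymbol\Theta\|^2\sigma_v^2+\sigma^2},$$ where the supremum is over $w\in\mathbb C$, $p\in\mathbb R_+$ and $\boldsymbol\Theta=\mathrm{diag}(e^{j\theta_1},\dots,e^{j\theta_N})$ with $\theta_n\in\mathbb R$, subject to $|w|^2\le P_{\mathrm{BS}}^{\max}$ and $p^2\|\boldsymbol\Theta\mathbf g w\|^2+p^2N\sigma_v^2\le P_{\mathrm{A}}^{\max}$. Then, as $N\to\infty$, $\gamma_{\mathrm{active}}(N)$ behaves asymptotically as $$\gamma_{\mathrm{active}}(N)\to N\,\frac{P_{\mathrm{BS}}^{\max}P_{\mathrm{A}}^{\max}\pi^2\varrho_f^2\varrho_g^2}{16\left(P_{\mathrm{A}}^{\max}\sigma_v^2\varrho_f^2+P_{\mathrm{BS}}^{\max}\sigma^2\varrho_g^2+\sigma^2\sigma_v^2\right)},$$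 in the sense that $\gamma_{\mathrm{active}}(N)/N$ converges almost surely to the displayed constant (the displayed expression divided by $N$).
   Context: Model: received signal $r=p\,\mathbf f^{\mathrm H}\boldsymbol\Theta\mathbf g\,w s+p\,\mathbf f^{\mathrm H}\boldsymbol\Theta\mathbf v+z$, where $s$ is a unit-power symbol, $\mathbf v\sim\mathcal{CN}(\mathbf 0,\sigma_v^2\mathbf I_N)$ is the noise introduced by the active RIS, $z\sim\mathcal{CN}(0,\sigma^2)$ is receiver noise, all RIS elements share the common amplification factor $p$, $P_{\mathrm{BS}}^{\max}$ is the maximum base-station transmit power and $P_{\mathrm{A}}^{\max}$ the maximum reflect power of the active RIS. $\mathcal{CN}(0,\varrho^2)$ denotes the circularly symmetric complex Gaussian distribution with variance $\varrho^2$. *)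

theory Defs
  imports "HOL-Probability.Probability"
begin

text \<open>Circularly symmetric complex Gaussian CN(0, rho^2): real and imaginary parts
  are independent real Gaussians with mean 0 and variance rho^2/2
  (standard deviation rho / sqrt 2).\<close>
definition complex_gaussian :: "'a measure \<Rightarrow> ('a \<Rightarrow> complex) \<Rightarrow> real \<Rightarrow> bool" where
  "complex_gaussian M X rho \<longleftrightarrow>
     X \<in> borel_measurable M \<and>
     distributed M lborel (\<lambda>x. Re (X x)) (\<lambda>t. ennreal (normal_density 0 (rho / sqrt 2) t)) \<and>
     distributed M lborel (\<lambda>x. Im (X x)) (\<lambda>t. ennreal (normal_density 0 (rho / sqrt 2) t)) \<and>
     prob_space.indep_var M borel (\<lambda>x. Re (X x)) borel (\<lambda>x. Im (X x))"

definition snr_active ::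
  "real \<Rightarrow> real \<Rightarrow> real \<Rightarrow> real \<Rightarrow> (nat \<Rightarrow> complex) \<Rightarrow> (nat \<Rightarrow> complex) \<Rightarrow> nat \<Rightarrow> real" where
  "snr_active Pbs Pa sigma2 sigmav2 f g N =
     Sup { (cmod (complex_of_real p * (\<Sum>n<N. cnj (f n) * cis (theta n) * g n) * w))\<^sup>2
           / (p\<^sup>2 * (\<Sum>n<N. (cmod (cnj (f n) * cis (theta n)))\<^sup>2) * sigmav2 + sigma2)
         | w p theta. p \<ge> 0 \<and> (cmod w)\<^sup>2 \<le> Pbs \<and>
             p\<^sup>2 * (\<Sum>n<N. (cmod (cis (theta n) * g n * w))\<^sup>2) + p\<^sup>2 * real N * sigmav2 \<le> Pa }"

end

theory Submission
  imports Defs "HOL-Library.Discrete_Functions"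
begin


lemma key_ineq:
  fixes q u T S F G Pa Pbs s sv :: real and N :: real
  assumes q: "q \<ge> 0" and u: "0 \<le> u" "u \<le> Pbs" and c: "q * (G * u + N * sv) \<le> Pa"
    and T: "0 \<le> T" "T \<le> S\<^sup>2" and F: "F \<ge> 0" and G: "G \<ge> 0" and N: "N > 0"
    and pos: "Pa > 0" "Pbs > 0" "s > 0" "sv > 0"
  shows "q * T * u / (q * F * sv + s) \<le> Pa * Pbs * S\<^sup>2 / (Pa * sv * F + s * Pbs * G + N * s * sv)"
proof -
  define D where "D = Pa * sv * F + s * Pbs * G + N * s * sv"
  have Dpos: "D > 0" unfolding D_def using pos F G N
    by (intro add_nonneg_pos) (auto intro!: add_nonneg_nonneg mult_nonneg_nonneg)
  have bpos: "q * F * sv + s > 0" using q F pos by (intro add_nonneg_pos) auto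
  have h1: "q * u * Pa * sv * F \<le> q * Pbs * Pa * sv * F"
    using q u pos F by (intro mult_right_mono mult_left_mono) auto
  have h2: "q * u * (Pbs * G + N * sv) \<le> Pbs * (q * (G * u + N * sv))"
  proof -
    have "q * u * N * sv \<le> q * Pbs * N * sv" using q u pos N
      by (intro mult_right_mono mult_left_mono) auto
    then show ?thesis by (simp add: algebra_simps)
  qed
  also have "\<dots> \<le> Pbs * Pa" using c pos by (intro mult_left_mono) auto
  finally have h2': "q * u * (Pbs * G + N * sv) \<le> Pbs * Pa" .
  have key: "q * u * D \<le> Pa * Pbs * (q * F * sv + s)"
  proof -
    have "q * u * D = q * u * Pa * sv * F + s * (q * u * (Pbs * G + N * sv))"
      unfolding D_def by (simp add: algebra_simps)
    also have "\<dots> \<le> q * Pbs * Pa * sv * F + s * (Pbs * Pa)"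
      using h1 h2' pos by (intro add_mono mult_left_mono) auto
    also have "\<dots> = Pa * Pbs * (q * F * sv + s)" by (simp add: algebra_simps)
    finally show ?thesis .
  qed
  have "q * T * u \<le> q * S\<^sup>2 * u" using q u T by (intro mult_right_mono mult_left_mono) auto
  have "q * T * u * D \<le> q * S\<^sup>2 * u * D"
    using \<open>q * T * u \<le> q * S\<^sup>2 * u\<close> Dpos by (simp add: mult_right_mono)
  also have "\<dots> = S\<^sup>2 * (q * u * D)" by (simp add: algebra_simps)
  also have "\<dots> \<le> S\<^sup>2 * (Pa * Pbs * (q * F * sv + s))" using key by (intro mult_left_mono) auto
  finally have "q * T * u * D \<le> Pa * Pbs * S\<^sup>2 * (q * F * sv + s)" by (simp add: algebra_simps)
  then show ?thesis using Dpos bpos unfolding D_def[symmetric]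
    by (simp add: divide_le_eq le_divide_eq field_simps)
qed

lemma cnj_cis_norm: "(cmod (cnj a * cis t))\<^sup>2 = (cmod a)\<^sup>2"
  by (simp add: norm_mult)

lemma mult_cis_Arg: "c * cis (- Arg c) = complex_of_real (cmod c)"
proof (cases "c = 0")
  case False
  have "c = complex_of_real (cmod c) * cis (Arg c)"
    using False by (simp add: cis_Arg Complex.sgn_eq)
  then have "c * cis (- Arg c) = complex_of_real (cmod c) * (cis (Arg c) * cis (- Arg c))"
    by (metis mult.assoc)
  also have "\<dots> = complex_of_real (cmod c)" by (simp add: cis_mult)
  finally show ?thesis .
qed simp

lemma snr_formula:
  fixes f g :: "nat \<Rightarrow> complex"
  assumes pos: "Pbs > 0" "Pa > 0" "sigma2 > 0" "sigmav2 > 0" and N: "N > 0"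
  shows "snr_active Pbs Pa sigma2 sigmav2 f g N =
    Pa * Pbs * (\<Sum>n<N. cmod (f n) * cmod (g n))\<^sup>2 /
      (Pa * sigmav2 * (\<Sum>n<N. (cmod (f n))\<^sup>2) + sigma2 * Pbs * (\<Sum>n<N. (cmod (g n))\<^sup>2)
        + real N * sigma2 * sigmav2)"
proof -
  define S where "S = (\<Sum>n<N. cmod (f n) * cmod (g n))"
  define F where "F = (\<Sum>n<N. (cmod (f n))\<^sup>2)"
  define G where "G = (\<Sum>n<N. (cmod (g n))\<^sup>2)"
  have F0: "F \<ge> 0" unfolding F_def by (intro sum_nonneg) auto
  have G0: "G \<ge> 0" unfolding G_def by (intro sum_nonneg) auto
  have S0: "S \<ge> 0" unfolding S_def by (intro sum_nonneg) auto
  have NN: "real N > 0" using N by simp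
  let ?A = "{ (cmod (complex_of_real p * (\<Sum>n<N. cnj (f n) * cis (theta n) * g n) * w))\<^sup>2
           / (p\<^sup>2 * (\<Sum>n<N. (cmod (cnj (f n) * cis (theta n)))\<^sup>2) * sigmav2 + sigma2)
         | w p theta. p \<ge> 0 \<and> (cmod w)\<^sup>2 \<le> Pbs \<and>
             p\<^sup>2 * (\<Sum>n<N. (cmod (cis (theta n) * g n * w))\<^sup>2) + p\<^sup>2 * real N * sigmav2 \<le> Pa }"
  define V where "V = Pa * Pbs * S\<^sup>2 / (Pa * sigmav2 * F + sigma2 * Pbs * G + real N * sigma2 * sigmav2)"
  have elem: "(cmod (complex_of_real p * (\<Sum>n<N. cnj (f n) * cis (theta n) * g n) * w))\<^sup>2
           / (p\<^sup>2 * (\<Sum>n<N. (cmod (cnj (f n) * cis (theta n)))\<^sup>2) * sigmav2 + sigma2)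
       = p\<^sup>2 * (cmod (\<Sum>n<N. cnj (f n) * cis (theta n) * g n))\<^sup>2 * (cmod w)\<^sup>2 / (p\<^sup>2 * F * sigmav2 + sigma2)"
    for p :: real and theta w
    by (simp add: F_def norm_mult power_mult_distrib)
  have cons: "(\<Sum>n<N. (cmod (cis (theta n) * g n * w))\<^sup>2) = G * (cmod w)\<^sup>2" for theta w
    by (simp add: G_def norm_mult power_mult_distrib sum_distrib_right)
  have ub: "x \<le> V" if "x \<in> ?A" for x
  proof -
    from that obtain w p theta where x: "x = (cmod (complex_of_real p * (\<Sum>n<N. cnj (f n) * cis (theta n) * g n) * w))\<^sup>2
           / (p\<^sup>2 * (\<Sum>n<N. (cmod (cnj (f n) * cis (theta n)))\<^sup>2) * sigmav2 + sigma2)"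
      and p: "p \<ge> 0" and w: "(cmod w)\<^sup>2 \<le> Pbs"
      and c: "p\<^sup>2 * (\<Sum>n<N. (cmod (cis (theta n) * g n * w))\<^sup>2) + p\<^sup>2 * real N * sigmav2 \<le> Pa"
      by blast
    have T: "cmod (\<Sum>n<N. cnj (f n) * cis (theta n) * g n) \<le> S"
      unfolding S_def by (rule order_trans[OF norm_sum]) (simp add: norm_mult)
    have T2: "(cmod (\<Sum>n<N. cnj (f n) * cis (theta n) * g n))\<^sup>2 \<le> S\<^sup>2"
      using T by (intro power_mono) auto
    have c': "p\<^sup>2 * (G * (cmod w)\<^sup>2 + real N * sigmav2) \<le> Pa"
      using c unfolding cons by (simp add: algebra_simps)
    have "x = p\<^sup>2 * (cmod (\<Sum>n<N. cnj (f n) * cis (theta n) * g n))\<^sup>2 * (cmod w)\<^sup>2 / (p\<^sup>2 * F * sigmav2 + sigma2)"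
      using x elem by simp
    also have "\<dots> \<le> V" unfolding V_def
      by (rule key_ineq) (use T2 c' F0 G0 NN pos w in auto)
    finally show ?thesis .
  qed
  define theta where "theta n = - Arg (cnj (f n) * g n)" for n
  define p where "p = sqrt (Pa / (G * Pbs + real N * sigmav2))"
  define w where "w = complex_of_real (sqrt Pbs)"
  have den: "G * Pbs + real N * sigmav2 > 0" using G0 pos NN
    by (intro add_nonneg_pos) auto
  have qn: "0 \<le> Pa / (G * Pbs + real N * sigmav2)" using den pos by simp
  have p2: "p\<^sup>2 = Pa / (G * Pbs + real N * sigmav2)" unfolding p_def using qn by simp
  have w2: "(cmod w)\<^sup>2 = Pbs" unfolding w_def using pos by simp
  have sumeq: "(\<Sum>n<N. cnj (f n) * cis (theta n) * g n) = complex_of_real S"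
  proof -
    have "(\<Sum>n<N. cnj (f n) * cis (theta n) * g n) = (\<Sum>n<N. complex_of_real (cmod (f n) * cmod (g n)))"
    proof (rule sum.cong)
      fix n
      have "cnj (f n) * cis (theta n) * g n = (cnj (f n) * g n) * cis (- Arg (cnj (f n) * g n))"
        by (simp add: theta_def algebra_simps)
      also have "\<dots> = complex_of_real (cmod (f n) * cmod (g n))"
        by (simp add: mult_cis_Arg norm_mult)
      finally show "cnj (f n) * cis (theta n) * g n = complex_of_real (cmod (f n) * cmod (g n))" .
    qed simp
    then show ?thesis by (simp add: S_def)
  qed
  have mem: "V \<in> ?A"
  proof -
    have val: "p\<^sup>2 * (cmod (\<Sum>n<N. cnj (f n) * cis (theta n) * g n))\<^sup>2 * (cmod w)\<^sup>2 / (p\<^sup>2 * F * sigmav2 + sigma2) = V"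
    proof -
      have "p\<^sup>2 * (cmod (\<Sum>n<N. cnj (f n) * cis (theta n) * g n))\<^sup>2 * (cmod w)\<^sup>2 / (p\<^sup>2 * F * sigmav2 + sigma2)
         = Pa / (G * Pbs + real N * sigmav2) * S\<^sup>2 * Pbs / (Pa / (G * Pbs + real N * sigmav2) * F * sigmav2 + sigma2)"
        using sumeq p2 w2 S0 by simp
      also have "\<dots> = V"
      proof -
        define K where "K = G * Pbs + real N * sigmav2"
        have K: "K > 0" using den K_def by simp
        have d: "Pa / K * F * sigmav2 + sigma2 = (Pa * F * sigmav2 + sigma2 * K) / K"
          using K by (simp add: field_simps)
        have "Pa / K * S\<^sup>2 * Pbs / (Pa / K * F * sigmav2 + sigma2) = Pa * S\<^sup>2 * Pbs / (Pa * F * sigmav2 + sigma2 * K)"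
          unfolding d using K by (simp add: field_simps)
        also have "\<dots> = V" unfolding V_def K_def by (simp add: algebra_simps)
        finally show ?thesis unfolding K_def .
      qed
      finally show ?thesis .
    qed
    have "p \<ge> 0" unfolding p_def using qn by simp
    moreover have "p\<^sup>2 * (\<Sum>n<N. (cmod (cis (theta n) * g n * w))\<^sup>2) + p\<^sup>2 * real N * sigmav2 \<le> Pa"
    proof -
      have "p\<^sup>2 * (G * Pbs) + p\<^sup>2 * real N * sigmav2 = p\<^sup>2 * (G * Pbs + real N * sigmav2)"
        by (simp add: algebra_simps)
      also have "\<dots> = Pa" unfolding p2 using den by simp
      finally show ?thesis unfolding cons w2 by simp
    qed
    ultimately show ?thesis using val elem[of p theta w] w2 by force
  qed
  have "Sup ?A = V" by (rule cSup_eq_maximum[OF mem ub])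
  then show ?thesis unfolding snr_active_def V_def S_def F_def G_def by simp
qed



lemma filterlim_floor_sqrt: "filterlim floor_sqrt at_top at_top"
  unfolding filterlim_at_top
proof
  fix Z :: nat
  show "eventually (\<lambda>n. Z \<le> floor_sqrt n) at_top"
    unfolding eventually_at_top_linorder
    by (rule exI[of _ "Z\<^sup>2"]) (auto intro: le_floor_sqrtI)
qed

lemma sandwich_sq:
  fixes x :: "nat \<Rightarrow> real"
  assumes nn: "\<And>i. 0 \<le> x i"
    and lim: "(\<lambda>k. (\<Sum>i<(Suc k)\<^sup>2. x i) / real ((Suc k)\<^sup>2)) \<longlonglongrightarrow> \<mu>"
  shows "(\<lambda>n. (\<Sum>i<n. x i) / real n) \<longlonglongrightarrow> \<mu>"
proof -
  define s where "s n = (\<Sum>i<n. x i)" for n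
  define a where "a k = s ((Suc k)\<^sup>2) / real ((Suc k)\<^sup>2)" for k
  have s_mono: "s m \<le> s n" if "m \<le> n" for m n
    unfolding s_def using that nn by (intro sum_mono2) auto
  have s_nn: "0 \<le> s n" for n unfolding s_def using nn by (intro sum_nonneg) auto
  have a_lim: "a \<longlonglongrightarrow> \<mu>" using lim unfolding a_def s_def .
  have a1_lim: "(\<lambda>k. a (k - 1)) \<longlonglongrightarrow> \<mu>"
    by (rule filterlim_compose[OF a_lim]) (simp add: filterlim_minus_const_nat_at_top)
  define lo where "lo k = a (k - 1) * (real k / real (Suc k))\<^sup>2" for k
  define hi where "hi k = a k * (real (Suc k) / real k)\<^sup>2" for k
  have lo_lim: "lo \<longlonglongrightarrow> \<mu>"
  proof -
    have "lo \<longlonglongrightarrow> \<mu> * 1\<^sup>2" unfolding lo_def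
      by (intro tendsto_intros a1_lim LIMSEQ_n_over_Suc_n)
    then show ?thesis by simp
  qed
  have hi_lim: "hi \<longlonglongrightarrow> \<mu>"
  proof -
    have "hi \<longlonglongrightarrow> \<mu> * 1\<^sup>2" unfolding hi_def
      by (intro tendsto_intros a_lim LIMSEQ_Suc_n_over_n)
    then show ?thesis by simp
  qed
  have lo': "(\<lambda>n. lo (floor_sqrt n)) \<longlonglongrightarrow> \<mu>"
    by (rule filterlim_compose[OF lo_lim filterlim_floor_sqrt])
  have hi': "(\<lambda>n. hi (floor_sqrt n)) \<longlonglongrightarrow> \<mu>"
    by (rule filterlim_compose[OF hi_lim filterlim_floor_sqrt])
  have bounds: "lo (floor_sqrt n) \<le> s n / real n \<and> s n / real n \<le> hi (floor_sqrt n)" if n: "n \<ge> 1" for n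
  proof -
    define k where "k = floor_sqrt n"
    have k1: "k \<ge> 1" unfolding k_def using n by (simp add: Suc_le_eq)
    have kn: "k\<^sup>2 \<le> n" unfolding k_def by simp
    have nk: "n < (Suc k)\<^sup>2" unfolding k_def by (rule Suc_floor_sqrt_power2_gt)
    have kr: "real k > 0" using k1 by simp
    have knr: "real k ^ 2 \<le> real n" using kn by (metis of_nat_le_iff of_nat_power)
    have nkr: "real n < real (Suc k) ^ 2" using nk by (metis of_nat_less_iff of_nat_power)
    have nr: "real n > 0" using n by simp
    have "lo k = s (k\<^sup>2) / (real (Suc k))\<^sup>2"
    proof -
      have "Suc (k - 1) = k" using k1 by simp
      then have "a (k - 1) = s (k\<^sup>2) / (real k)\<^sup>2" unfolding a_def by simp
      then show ?thesis unfolding lo_def using kr by (simp add: power_divide)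
    qed
    also have "\<dots> \<le> s n / (real (Suc k))\<^sup>2"
      using s_mono[OF kn] by (intro divide_right_mono) auto
    also have "\<dots> \<le> s n / real n"
      using nkr nr s_nn by (intro divide_left_mono) auto
    finally have L: "lo k \<le> s n / real n" .
    have "s n / real n \<le> s n / (real k)\<^sup>2"
      using knr kr nr s_nn by (intro divide_left_mono) auto
    also have "\<dots> \<le> s ((Suc k)\<^sup>2) / (real k)\<^sup>2"
      using s_mono[of n "(Suc k)\<^sup>2"] nk by (intro divide_right_mono) auto
    also have "\<dots> = hi k"
      unfolding hi_def a_def using kr by (simp add: power_divide)
    finally have H: "s n / real n \<le> hi k" .
    show ?thesis using L H unfolding k_def by simp
  qed
  have "(\<lambda>n. s n / real n) \<longlonglongrightarrow> \<mu>"
  proof (rule tendsto_sandwich[OF _ _ lo' hi'])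
    show "eventually (\<lambda>n. lo (floor_sqrt n) \<le> s n / real n) sequentially"
      using bounds unfolding eventually_at_top_linorder by blast
    show "eventually (\<lambda>n. s n / real n \<le> hi (floor_sqrt n)) sequentially"
      using bounds unfolding eventually_at_top_linorder by blast
  qed
  then show ?thesis unfolding s_def .
qed



lemma (in prob_space) slln_core:
  fixes X :: "nat \<Rightarrow> 'a \<Rightarrow> real"
  assumes meas[measurable]: "\<And>i. X i \<in> borel_measurable M"
    and nn: "\<And>i x. 0 \<le> X i x"
    and int: "\<And>n. integrable M (\<lambda>x. ((\<Sum>i<n. X i x) - real n * \<mu>)\<^sup>2)"
    and var: "\<And>n. (\<integral>x. ((\<Sum>i<n. X i x) - real n * \<mu>)\<^sup>2 \<partial>M) \<le> real n * V"
  shows "AE x in M. (\<lambda>n. (\<Sum>i<n. X i x) / real n) \<longlonglongrightarrow> \<mu>"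
proof -
  define m where "m k = (Suc k)\<^sup>2" for k
  define T where "T k x = ((\<Sum>i<m k. X i x) - real (m k) * \<mu>)\<^sup>2 / (real (m k))\<^sup>2" for k x
  have mpos: "real (m k) > 0" for k unfolding m_def by simp
  have T_meas[measurable]: "T k \<in> borel_measurable M" for k unfolding T_def by measurable
  have T_int: "integrable M (T k)" for k
    unfolding T_def by (intro integrable_divide int)
  have T_nn: "0 \<le> T k x" for k x unfolding T_def by simp
  have V0: "0 \<le> V"
  proof -
    have "0 \<le> (\<integral>x. ((\<Sum>i<1. X i x) - real 1 * \<mu>)\<^sup>2 \<partial>M)" by (intro integral_nonneg_AE) auto
    also have "\<dots> \<le> real 1 * V" by (rule var)
    finally show ?thesis by simp
  qed
  have T_E: "(\<integral>x. T k x \<partial>M) \<le> V / real (m k)" for k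
  proof -
    have "(\<integral>x. T k x \<partial>M) = (\<integral>x. ((\<Sum>i<m k. X i x) - real (m k) * \<mu>)\<^sup>2 \<partial>M) / (real (m k))\<^sup>2"
      unfolding T_def by simp
    also have "\<dots> \<le> real (m k) * V / (real (m k))\<^sup>2"
      using var[of "m k"] by (intro divide_right_mono) auto
    also have "\<dots> = V / real (m k)" using mpos[of k] by (simp add: power2_eq_square)
    finally show ?thesis .
  qed
  have summ: "summable (\<lambda>k. V / real (m k))"
  proof -
    have "summable (\<lambda>n. inverse (real n ^ 2))" by (rule inverse_power_summable) auto
    then have "summable (\<lambda>n. inverse (real (Suc n) ^ 2))" by (subst summable_Suc_iff)
    then have "summable (\<lambda>n. V * inverse (real (Suc n) ^ 2))" by (rule summable_mult)
    then show ?thesis unfolding m_def by (simp add: divide_inverse)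
  qed
  have "(\<integral>\<^sup>+x. (\<Sum>k. ennreal (T k x)) \<partial>M) = (\<Sum>k. \<integral>\<^sup>+x. ennreal (T k x) \<partial>M)"
    by (rule nn_integral_suminf) measurable
  also have "\<dots> = (\<Sum>k. ennreal (\<integral>x. T k x \<partial>M))"
    by (intro suminf_cong nn_integral_eq_integral T_int) (auto simp: T_nn)
  also have "\<dots> \<le> (\<Sum>k. ennreal (V / real (m k)))"
    by (intro suminf_le summableI ennreal_leI T_E)
  also have "\<dots> < top"
  proof -
    have "(\<Sum>k. ennreal (V / real (m k))) \<noteq> top"
      by (rule ennreal_suminf_neq_top[OF summ]) (use V0 mpos in auto)
    then show ?thesis by (rule le_neq_trans[OF top_greatest])
  qed
  finally have fin0: "(\<integral>\<^sup>+x. (\<Sum>k. ennreal (T k x)) \<partial>M) < top" .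
  then have fin: "(\<integral>\<^sup>+x. (\<Sum>k. ennreal (T k x)) \<partial>M) \<noteq> top" by (rule less_imp_neq)
  have "AE x in M. (\<Sum>k. ennreal (T k x)) \<noteq> \<infinity>"
    by (rule nn_integral_PInf_AE) (use fin in \<open>simp_all add: infinity_ennreal_def\<close>)
  then show ?thesis
  proof (eventually_elim)
    case (elim x)
    have "summable (\<lambda>k. T k x)" by (rule summable_suminf_not_top[OF T_nn]) (use elim in \<open>simp add: infinity_ennreal_def\<close>)
    then have "(\<lambda>k. T k x) \<longlonglongrightarrow> 0" by (rule summable_LIMSEQ_zero)
    then have "(\<lambda>k. sqrt (T k x)) \<longlonglongrightarrow> sqrt 0" by (rule tendsto_real_sqrt)
    moreover have "sqrt (T k x) = \<bar>(\<Sum>i<m k. X i x) / real (m k) - \<mu>\<bar>" for k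
    proof -
      have "T k x = ((\<Sum>i<m k. X i x) / real (m k) - \<mu>)\<^sup>2"
        unfolding T_def using mpos[of k] by (simp add: power_divide[symmetric] diff_divide_distrib)
      then show ?thesis by simp
    qed
    ultimately have "(\<lambda>k. \<bar>(\<Sum>i<m k. X i x) / real (m k) - \<mu>\<bar>) \<longlonglongrightarrow> 0" by simp
    then have "(\<lambda>k. (\<Sum>i<m k. X i x) / real (m k) - \<mu>) \<longlonglongrightarrow> 0" by (rule tendsto_rabs_zero_cancel)
    then have "(\<lambda>k. (\<Sum>i<m k. X i x) / real (m k)) \<longlonglongrightarrow> \<mu>" by (simp add: LIM_zero_iff)
    then show ?case unfolding m_def by (intro sandwich_sq) (auto simp: nn)
  qed
qed



lemma (in prob_space) var_sum_bound:
  fixes X :: "nat \<Rightarrow> 'a \<Rightarrow> real"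
  assumes intX: "\<And>i. integrable M (X i)"
    and EX: "\<And>i. expectation (X i) = \<mu>"
    and intXX: "\<And>i j. integrable M (\<lambda>x. X i x * X j x)"
    and EXX: "\<And>i j. i \<noteq> j \<Longrightarrow> expectation (\<lambda>x. X i x * X j x) = \<mu>\<^sup>2"
    and EX2: "\<And>i. expectation (\<lambda>x. X i x * X i x) \<le> V"
  shows "integrable M (\<lambda>x. ((\<Sum>i<n. X i x) - real n * \<mu>)\<^sup>2)"
    and "(\<integral>x. ((\<Sum>i<n. X i x) - real n * \<mu>)\<^sup>2 \<partial>M) \<le> real n * V"
proof -
  define c where "c i j x = X i x * X j x - \<mu> * X i x - \<mu> * X j x + \<mu>\<^sup>2" for i j x
  have eq: "((\<Sum>i<n. X i x) - real n * \<mu>)\<^sup>2 = (\<Sum>i<n. \<Sum>j<n. c i j x)" for x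
  proof -
    have "(\<Sum>i<n. X i x) - real n * \<mu> = (\<Sum>i<n. (X i x - \<mu>))"
      by (simp add: sum_subtractf)
    then have "((\<Sum>i<n. X i x) - real n * \<mu>)\<^sup>2 = (\<Sum>i<n. (X i x - \<mu>)) * (\<Sum>j<n. (X j x - \<mu>))"
      by (simp add: power2_eq_square)
    also have "\<dots> = (\<Sum>i<n. \<Sum>j<n. (X i x - \<mu>) * (X j x - \<mu>))"
      by (rule sum_product)
    also have "\<dots> = (\<Sum>i<n. \<Sum>j<n. c i j x)"
      unfolding c_def by (simp add: algebra_simps power2_eq_square)
    finally show ?thesis .
  qed
  have cint: "integrable M (c i j)" for i j
    unfolding c_def[abs_def] by (intro Bochner_Integration.integrable_add Bochner_Integration.integrable_diff
        integrable_mult_right intXX intX) auto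
  have cE: "expectation (c i j) = expectation (\<lambda>x. X i x * X j x) - \<mu>\<^sup>2" for i j
  proof -
    have "expectation (c i j) = expectation (\<lambda>x. X i x * X j x) - \<mu> * expectation (X i) - \<mu> * expectation (X j) + \<mu>\<^sup>2"
      unfolding c_def[abs_def]
      by (subst Bochner_Integration.integral_add Bochner_Integration.integral_diff integral_mult_right_zero;
          (intro Bochner_Integration.integrable_add Bochner_Integration.integrable_diff
           integrable_mult_right intXX intX)?; (simp add: prob_space)?)+
    then show ?thesis using EX by (simp add: power2_eq_square)
  qed
  show "integrable M (\<lambda>x. ((\<Sum>i<n. X i x) - real n * \<mu>)\<^sup>2)"
    unfolding eq by (intro Bochner_Integration.integrable_sum cint)
  have "(\<integral>x. ((\<Sum>i<n. X i x) - real n * \<mu>)\<^sup>2 \<partial>M) = (\<Sum>i<n. \<Sum>j<n. expectation (c i j))"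
  proof -
    have "(\<integral>x. (\<Sum>i<n. \<Sum>j<n. c i j x) \<partial>M) = (\<Sum>i<n. (\<integral>x. (\<Sum>j<n. c i j x) \<partial>M))"
      by (rule Bochner_Integration.integral_sum) (intro Bochner_Integration.integrable_sum cint)
    also have "\<dots> = (\<Sum>i<n. \<Sum>j<n. expectation (c i j))"
      by (intro sum.cong refl Bochner_Integration.integral_sum cint)
    finally show ?thesis unfolding eq .
  qed
  also have "\<dots> = (\<Sum>i<n. expectation (c i i))"
  proof (rule sum.cong[OF refl])
    fix i assume i: "i \<in> {..<n}"
    have "(\<Sum>j<n. expectation (c i j)) = expectation (c i i) + (\<Sum>j\<in>{..<n} - {i}. expectation (c i j))"
      using i by (subst sum.remove[of _ i]) auto
    also have "(\<Sum>j\<in>{..<n} - {i}. expectation (c i j)) = 0"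
      by (intro sum.neutral) (auto simp: cE EXX)
    finally show "(\<Sum>j<n. expectation (c i j)) = expectation (c i i)" by simp
  qed
  also have "\<dots> \<le> (\<Sum>i<n. V)"
  proof (rule sum_mono)
    fix i show "expectation (c i i) \<le> V" using EX2[of i] zero_le_power2[of \<mu>] unfolding cE by (smt (verit) zero_le_power2)
  qed
  also have "\<dots> = real n * V" by simp
  finally show "(\<integral>x. ((\<Sum>i<n. X i x) - real n * \<mu>)\<^sup>2 \<partial>M) \<le> real n * V" .
qed



lemma nn_integral_inv_1_plus_sq:
  "(\<integral>\<^sup>+t. ennreal (1 / (1 + t\<^sup>2)) \<partial>lborel) = ennreal pi"
proof -
  have "(\<integral>\<^sup>+t. ennreal (1 / (1 + t\<^sup>2)) * indicator {0..} t \<partial>lborel) = ennreal (pi / 2 - arctan 0)"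
  proof (rule nn_integral_FTC_atLeast)
    show "(arctan \<longlongrightarrow> pi / 2) at_top" by (rule tendsto_arctan_at_top)
  qed (auto intro!: derivative_eq_intros simp: add_pos_nonneg power2_eq_square divide_inverse)
  then have h: "(\<integral>\<^sup>+t. ennreal (indicator {0..} t *\<^sub>R (1 / (1 + t\<^sup>2))) \<partial>lborel) = ennreal (pi / 2)"
    by (simp add: indicator_mult_ennreal mult.commute)
  have hb: "has_bochner_integral lborel (\<lambda>t. indicator {0..} t *\<^sub>R (1 / (1 + t\<^sup>2))) (pi / 2)"
    by (rule has_bochner_integral_nn_integral[OF _ _ _ h]) (auto simp: add_pos_nonneg)
  have "has_bochner_integral lborel (\<lambda>t::real. 1 / (1 + t\<^sup>2)) (2 *\<^sub>R (pi / 2))"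
    by (rule has_bochner_integral_even_function[OF hb]) simp
  then have hb2: "has_bochner_integral lborel (\<lambda>t::real. 1 / (1 + t\<^sup>2)) pi" by simp
  show ?thesis
    using nn_integral_eq_integral[OF integrable.intros[OF hb2]]
      has_bochner_integral_integral_eq[OF hb2]
    by (simp add: add_pos_nonneg)
qed

lemma H_identity:
  fixes s x t :: real
  assumes s: "s > 0"
  shows "\<bar>x\<bar> * (normal_density 0 s x * normal_density 0 s (x * t) * sqrt (x\<^sup>2 + (x * t)\<^sup>2))
    = 1 / (s * sqrt (2 * pi)) * (normal_density 0 (s / sqrt (1 + t\<^sup>2)) x * x\<^sup>2)"
proof -
  define a where "a = sqrt (1 + t\<^sup>2)"
  have a: "a > 0" unfolding a_def by (simp add: add_pos_nonneg)
  have a2: "a\<^sup>2 = 1 + t\<^sup>2" unfolding a_def by (simp add: add_pos_nonneg)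
  define E where "E = exp (- (x\<^sup>2 * (1 + t\<^sup>2)) / (2 * s\<^sup>2))"
  have sq: "sqrt (x\<^sup>2 + (x * t)\<^sup>2) = \<bar>x\<bar> * a"
  proof -
    have "x\<^sup>2 + (x * t)\<^sup>2 = x\<^sup>2 * (1 + t\<^sup>2)" by (simp add: algebra_simps power_mult_distrib)
    then show ?thesis unfolding a_def by (simp add: real_sqrt_mult)
  qed
  have ee: "exp (- (x - 0)\<^sup>2 / (2 * s\<^sup>2)) * exp (- (x * t - 0)\<^sup>2 / (2 * s\<^sup>2)) = E"
  proof -
    have "- (x - 0)\<^sup>2 / (2 * s\<^sup>2) + - (x * t - 0)\<^sup>2 / (2 * s\<^sup>2) = - (x\<^sup>2 * (1 + t\<^sup>2)) / (2 * s\<^sup>2)"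
      using s by (simp add: field_simps power_mult_distrib)
    then show ?thesis unfolding E_def by (metis exp_add)
  qed
  have e2: "exp (- (x - 0)\<^sup>2 / (2 * (s / a)\<^sup>2)) = E"
    unfolding E_def using a s a2 by (simp add: power_divide field_simps)
  have s1: "sqrt (2 * pi * s\<^sup>2) = sqrt (2 * pi) * s" using s by (simp add: real_sqrt_mult)
  have s2: "sqrt (2 * pi * (s / a)\<^sup>2) = sqrt (2 * pi) * s / a" using s a
    by (simp add: real_sqrt_mult power_divide real_sqrt_divide)
  have pi2: "sqrt (2 * pi) * sqrt (2 * pi) = 2 * pi" by simp
  have "\<bar>x\<bar> * (normal_density 0 s x * normal_density 0 s (x * t) * sqrt (x\<^sup>2 + (x * t)\<^sup>2))
      = x\<^sup>2 * a * E / (sqrt (2 * pi) * s * (sqrt (2 * pi) * s))"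
    unfolding normal_density_def sq s1 using ee[symmetric]
    by (simp add: power2_eq_square field_simps)
  also have "\<dots> = 1 / (s * sqrt (2 * pi)) * (1 / (sqrt (2 * pi) * s / a) * E * x\<^sup>2)"
    using a s by (simp add: field_simps)
  also have "\<dots> = 1 / (s * sqrt (2 * pi)) * (normal_density 0 (s / sqrt (1 + t\<^sup>2)) x * x\<^sup>2)"
    unfolding normal_density_def a_def[symmetric] s2 e2 by simp
  finally show ?thesis .
qed

lemma rayleigh_nn:
  fixes s :: real
  assumes s: "s > 0"
  shows "(\<integral>\<^sup>+x. \<integral>\<^sup>+y. ennreal (normal_density 0 s x * normal_density 0 s y * sqrt (x\<^sup>2 + y\<^sup>2)) \<partial>lborel \<partial>lborel)
    = ennreal (s * sqrt (pi / 2))"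
proof -
  define c where "c = 1 / (s * sqrt (2 * pi))"
  have c: "c > 0" unfolding c_def using s by simp
  define H where "H x t = c * (normal_density 0 (s / sqrt (1 + t\<^sup>2)) x * x\<^sup>2)" for x t :: real
  have Hnn: "0 \<le> H x t" for x t unfolding H_def using c by simp
  have step1: "(\<integral>\<^sup>+y. ennreal (normal_density 0 s x * normal_density 0 s y * sqrt (x\<^sup>2 + y\<^sup>2)) \<partial>lborel)
      = (\<integral>\<^sup>+t. ennreal (H x t) \<partial>lborel)" if x: "x \<noteq> 0" for x
  proof -
    have "(\<integral>\<^sup>+y. ennreal (normal_density 0 s x * normal_density 0 s y * sqrt (x\<^sup>2 + y\<^sup>2)) \<partial>lborel)
      = ennreal \<bar>x\<bar> * (\<integral>\<^sup>+t. ennreal (normal_density 0 s x * normal_density 0 s (0 + x * t) * sqrt (x\<^sup>2 + (0 + x * t)\<^sup>2)) \<partial>lborel)"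
      by (rule nn_integral_real_affine) (use x in auto)
    also have "\<dots> = (\<integral>\<^sup>+t. ennreal \<bar>x\<bar> * ennreal (normal_density 0 s x * normal_density 0 s (x * t) * sqrt (x\<^sup>2 + (x * t)\<^sup>2)) \<partial>lborel)"
      by (subst nn_integral_cmult) auto
    also have "\<dots> = (\<integral>\<^sup>+t. ennreal (H x t) \<partial>lborel)"
    proof (rule nn_integral_cong)
      fix t :: real
      show "ennreal \<bar>x\<bar> * ennreal (normal_density 0 s x * normal_density 0 s (x * t) * sqrt (x\<^sup>2 + (x * t)\<^sup>2)) = ennreal (H x t)"
        unfolding H_def c_def H_identity[OF s, symmetric]
        by (simp add: ennreal_mult[symmetric])
    qed
    finally show ?thesis .
  qed
  have inner: "(\<integral>\<^sup>+x. ennreal (H x t) \<partial>lborel) = ennreal (c * s\<^sup>2 * (1 / (1 + t\<^sup>2)))" for t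
  proof -
    define \<sigma> where "\<sigma> = s / sqrt (1 + t\<^sup>2)"
    have \<sigma>: "\<sigma> > 0" unfolding \<sigma>_def using s by (simp add: add_pos_nonneg)
    have "has_bochner_integral lborel (\<lambda>x. normal_density 0 \<sigma> x * (x - 0) ^ (2 * 1)) (fact (2 * 1) / ((2 / \<sigma>\<^sup>2) ^ 1 * fact 1))"
      using \<sigma> by (rule normal_moment_even)
    then have "has_bochner_integral lborel (\<lambda>x. normal_density 0 \<sigma> x * x\<^sup>2) (\<sigma>\<^sup>2)"
      using \<sigma> by simp
    then have hb: "has_bochner_integral lborel (\<lambda>x. H x t) (c * \<sigma>\<^sup>2)"
      unfolding H_def \<sigma>_def[symmetric] by (rule has_bochner_integral_mult_right)
    have "(\<integral>\<^sup>+x. ennreal (H x t) \<partial>lborel) = ennreal (c * \<sigma>\<^sup>2)"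
      using nn_integral_eq_integral[OF integrable.intros[OF hb]] has_bochner_integral_integral_eq[OF hb] Hnn
      by simp
    also have "c * \<sigma>\<^sup>2 = c * s\<^sup>2 * (1 / (1 + t\<^sup>2))"
      unfolding \<sigma>_def by (simp add: power_divide add_pos_nonneg)
    finally show ?thesis .
  qed
  have "(\<integral>\<^sup>+x. \<integral>\<^sup>+y. ennreal (normal_density 0 s x * normal_density 0 s y * sqrt (x\<^sup>2 + y\<^sup>2)) \<partial>lborel \<partial>lborel)
      = (\<integral>\<^sup>+x. \<integral>\<^sup>+t. ennreal (H x t) \<partial>lborel \<partial>lborel)"
    by (rule nn_integral_cong_AE) (use AE_lborel_singleton[of 0] step1 in \<open>auto elim!: eventually_mono\<close>)
  also have "\<dots> = (\<integral>\<^sup>+t. \<integral>\<^sup>+x. ennreal (H x t) \<partial>lborel \<partial>lborel)"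
    by (rule lborel_pair.Fubini'[symmetric]) (unfold H_def normal_density_def, measurable)
  also have "\<dots> = (\<integral>\<^sup>+t. ennreal (c * s\<^sup>2) * ennreal (1 / (1 + t\<^sup>2)) \<partial>lborel)"
    unfolding inner using c by (intro nn_integral_cong) (simp add: ennreal_mult[symmetric] add_pos_nonneg)
  also have "\<dots> = ennreal (c * s\<^sup>2) * ennreal pi"
    by (subst nn_integral_cmult) (auto simp: nn_integral_inv_1_plus_sq)
  also have "\<dots> = ennreal (s * sqrt (pi / 2))"
  proof -
    have "c * s\<^sup>2 * pi = s * sqrt (pi / 2)"
    proof -
      have "sqrt (2 * pi) = sqrt 2 * sqrt pi" by (simp add: real_sqrt_mult)
      moreover have "sqrt (pi / 2) = sqrt pi / sqrt 2" by (simp add: real_sqrt_divide)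
      moreover have "sqrt pi * sqrt pi = pi" by simp
      ultimately show ?thesis unfolding c_def using s by (simp add: field_simps power2_eq_square)
    qed
    then show ?thesis using c by (simp add: ennreal_mult[symmetric])
  qed
  finally show ?thesis .
qed



lemma (in prob_space) indep_var_borel_lborel:
  fixes X Y :: "'a \<Rightarrow> real"
  assumes "indep_var borel X borel Y"
  shows "indep_var lborel X lborel Y"
  using assms unfolding indep_var_def indep_vars_def2
  by (simp add: bool.case_eq_if measurable_lborel2)

lemma (in prob_space) normal_even_moment_rv:
  assumes D: "distributed M lborel R (\<lambda>t. ennreal (normal_density 0 s t))" and s: "s > 0"
  shows "integrable M (\<lambda>x. R x ^ (2 * k))"
    and "expectation (\<lambda>x. R x ^ (2 * k)) = fact (2 * k) / ((2 / s\<^sup>2) ^ k * fact k)"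
proof -
  have hb: "has_bochner_integral lborel (\<lambda>x. normal_density 0 s x * (x - 0) ^ (2 * k)) (fact (2 * k) / ((2 / s\<^sup>2) ^ k * fact k))"
    using s by (rule normal_moment_even)
  then have hb': "has_bochner_integral lborel (\<lambda>x. normal_density 0 s x * x ^ (2 * k)) (fact (2 * k) / ((2 / s\<^sup>2) ^ k * fact k))"
    by simp
  show "integrable M (\<lambda>x. R x ^ (2 * k))"
    using distributed_integrable[OF D, of "\<lambda>x. x ^ (2 * k)"] integrable.intros[OF hb'] by simp
  show "expectation (\<lambda>x. R x ^ (2 * k)) = fact (2 * k) / ((2 / s\<^sup>2) ^ k * fact k)"
    using distributed_integral[OF D, of "\<lambda>x. x ^ (2 * k)"] has_bochner_integral_integral_eq[OF hb'] by simp
qed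

lemma (in prob_space) cg_facts:
  assumes cg: "complex_gaussian M Z \<rho>" and \<rho>: "\<rho> > 0"
  shows cg_meas: "Z \<in> borel_measurable M"
    and cg_int2: "integrable M (\<lambda>x. (cmod (Z x))\<^sup>2)"
    and cg_E2: "expectation (\<lambda>x. (cmod (Z x))\<^sup>2) = \<rho>\<^sup>2"
    and cg_int4: "integrable M (\<lambda>x. (cmod (Z x))\<^sup>2 * (cmod (Z x))\<^sup>2)"
    and cg_E4: "expectation (\<lambda>x. (cmod (Z x))\<^sup>2 * (cmod (Z x))\<^sup>2) \<le> 3 * \<rho>^4"
    and cg_int1: "integrable M (\<lambda>x. cmod (Z x))"
    and cg_E1: "expectation (\<lambda>x. cmod (Z x)) = sqrt pi / 2 * \<rho>"
proof -
  define s where "s = \<rho> / sqrt 2"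
  have s: "s > 0" unfolding s_def using \<rho> by simp
  have s2: "s\<^sup>2 = \<rho>\<^sup>2 / 2" unfolding s_def by (simp add: power_divide)
  have DR: "distributed M lborel (\<lambda>x. Re (Z x)) (\<lambda>t. ennreal (normal_density 0 s t))"
    and DI: "distributed M lborel (\<lambda>x. Im (Z x)) (\<lambda>t. ennreal (normal_density 0 s t))"
    and ind: "indep_var borel (\<lambda>x. Re (Z x)) borel (\<lambda>x. Im (Z x))"
    and Zm: "Z \<in> borel_measurable M"
    using cg unfolding complex_gaussian_def s_def by auto
  show "Z \<in> borel_measurable M" by (rule Zm)
  note Zm[measurable]
  have R2i: "integrable M (\<lambda>x. Re (Z x) ^ (2 * 1))" by (rule normal_even_moment_rv(1)[OF DR s])
  have R2e: "expectation (\<lambda>x. Re (Z x) ^ (2 * 1)) = s\<^sup>2"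
    using normal_even_moment_rv(2)[OF DR s, of 1] by simp
  have I2i: "integrable M (\<lambda>x. Im (Z x) ^ (2 * 1))" by (rule normal_even_moment_rv(1)[OF DI s])
  have I2e: "expectation (\<lambda>x. Im (Z x) ^ (2 * 1)) = s\<^sup>2"
    using normal_even_moment_rv(2)[OF DI s, of 1] by simp
  have R4i: "integrable M (\<lambda>x. Re (Z x) ^ (2 * 2))" by (rule normal_even_moment_rv(1)[OF DR s])
  have R4e: "expectation (\<lambda>x. Re (Z x) ^ (2 * 2)) = 3 * s^4"
    using normal_even_moment_rv(2)[OF DR s, of 2] s by (simp add: fact_numeral field_simps power_divide)
  have I4i: "integrable M (\<lambda>x. Im (Z x) ^ (2 * 2))" by (rule normal_even_moment_rv(1)[OF DI s])
  have I4e: "expectation (\<lambda>x. Im (Z x) ^ (2 * 2)) = 3 * s^4"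
    using normal_even_moment_rv(2)[OF DI s, of 2] s by (simp add: fact_numeral field_simps power_divide)
  have eq2: "(cmod (Z x))\<^sup>2 = Re (Z x) ^ (2 * 1) + Im (Z x) ^ (2 * 1)" for x
    by (simp add: cmod_power2)
  show int2: "integrable M (\<lambda>x. (cmod (Z x))\<^sup>2)"
    unfolding eq2 using R2i I2i by simp
  show "expectation (\<lambda>x. (cmod (Z x))\<^sup>2) = \<rho>\<^sup>2"
    unfolding eq2 using R2i I2i R2e I2e s2 by simp
  have b4: "norm ((cmod (Z x))\<^sup>2 * (cmod (Z x))\<^sup>2) \<le> 2 * Re (Z x) ^ (2 * 2) + 2 * Im (Z x) ^ (2 * 2)" for x
  proof -
    have "(cmod (Z x))\<^sup>2 * (cmod (Z x))\<^sup>2 = ((Re (Z x))\<^sup>2 + (Im (Z x))\<^sup>2)\<^sup>2"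
      by (simp only: cmod_power2 power2_eq_square[of "(Re (Z x))\<^sup>2 + (Im (Z x))\<^sup>2"])
    also have "\<dots> \<le> 2 * ((Re (Z x))\<^sup>2)\<^sup>2 + 2 * ((Im (Z x))\<^sup>2)\<^sup>2"
    proof -
      have "2 * ((Re (Z x))\<^sup>2)\<^sup>2 + 2 * ((Im (Z x))\<^sup>2)\<^sup>2 - ((Re (Z x))\<^sup>2 + (Im (Z x))\<^sup>2)\<^sup>2
          = ((Re (Z x))\<^sup>2 - (Im (Z x))\<^sup>2)\<^sup>2"
        by (simp add: power2_eq_square algebra_simps)
      then show ?thesis using zero_le_power2[of "(Re (Z x))\<^sup>2 - (Im (Z x))\<^sup>2"] by linarith
    qed
    also have "\<dots> = 2 * Re (Z x) ^ (2 * 2) + 2 * Im (Z x) ^ (2 * 2)"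
      by (simp add: power_mult)
    finally show ?thesis by simp
  qed
  have B4i: "integrable M (\<lambda>x. 2 * Re (Z x) ^ (2 * 2) + 2 * Im (Z x) ^ (2 * 2))"
    using R4i I4i by simp
  show int4: "integrable M (\<lambda>x. (cmod (Z x))\<^sup>2 * (cmod (Z x))\<^sup>2)"
    by (rule Bochner_Integration.integrable_bound[OF B4i]) (use b4 in auto)
  have "expectation (\<lambda>x. (cmod (Z x))\<^sup>2 * (cmod (Z x))\<^sup>2) \<le> expectation (\<lambda>x. 2 * Re (Z x) ^ (2 * 2) + 2 * Im (Z x) ^ (2 * 2))"
    by (rule Bochner_Integration.integral_mono[OF int4 B4i]) (use b4 in auto)
  also have "\<dots> = 12 * s^4" using R4i I4i R4e I4e by simp
  also have "\<dots> = 3 * \<rho>^4"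
  proof -
    have "12 * s^4 = 12 * (s\<^sup>2 * s\<^sup>2)" by (simp add: power4_eq_xxxx power2_eq_square)
    also have "\<dots> = 12 * (\<rho>\<^sup>2 / 2 * (\<rho>\<^sup>2 / 2))" by (simp only: s2)
    also have "\<dots> = 3 * \<rho>^4" by (simp add: power4_eq_xxxx power2_eq_square)
    finally show ?thesis by simp
  qed
  finally show "expectation (\<lambda>x. (cmod (Z x))\<^sup>2 * (cmod (Z x))\<^sup>2) \<le> 3 * \<rho>^4" .
  have B1i: "integrable M (\<lambda>x. 1 + (cmod (Z x))\<^sup>2)" using int2 by simp
  show int1: "integrable M (\<lambda>x. cmod (Z x))"
  proof (rule Bochner_Integration.integrable_bound[OF B1i])
    show "AE x in M. norm (cmod (Z x)) \<le> norm (1 + (cmod (Z x))\<^sup>2)"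
    proof (rule AE_I2)
      fix x
      have "cmod (Z x) \<le> 1 + (cmod (Z x))\<^sup>2"
      proof (cases "cmod (Z x) \<le> 1")
        case True then show ?thesis by (smt (verit) zero_le_power2)
      next
        case False
        then have "cmod (Z x) * 1 \<le> cmod (Z x) * cmod (Z x)" by (intro mult_left_mono) auto
        then show ?thesis by (simp add: power2_eq_square)
      qed
      then show "norm (cmod (Z x)) \<le> norm (1 + (cmod (Z x))\<^sup>2)" by simp
    qed
  qed simp
  have joint: "distributed M (lborel \<Otimes>\<^sub>M lborel) (\<lambda>x. (Re (Z x), Im (Z x)))
      (\<lambda>(x, y). ennreal (normal_density 0 s x) * ennreal (normal_density 0 s y))"
    by (rule distributed_joint_indep[OF _ _ DR DI indep_var_borel_lborel[OF ind]])
       (auto intro: lborel.sigma_finite_measure_axioms)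
  have "(\<integral>\<^sup>+x. ennreal (cmod (Z x)) \<partial>M) = (\<integral>\<^sup>+x. ennreal (sqrt ((fst (Re (Z x), Im (Z x)))\<^sup>2 + (snd (Re (Z x), Im (Z x)))\<^sup>2)) \<partial>M)"
    by (simp add: norm_complex_def)
  also have "\<dots> = (\<integral>\<^sup>+p. (case p of (x, y) \<Rightarrow> ennreal (normal_density 0 s x) * ennreal (normal_density 0 s y))
      * ennreal (sqrt ((fst p)\<^sup>2 + (snd p)\<^sup>2)) \<partial>(lborel \<Otimes>\<^sub>M lborel))"
    by (rule distributed_nn_integral[OF joint, symmetric]) measurable
  also have "\<dots> = (\<integral>\<^sup>+p. ennreal (normal_density 0 s (fst p) * normal_density 0 s (snd p) * sqrt ((fst p)\<^sup>2 + (snd p)\<^sup>2)) \<partial>(lborel \<Otimes>\<^sub>M lborel))"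
    by (intro nn_integral_cong) (auto simp: ennreal_mult[symmetric] split: prod.split)
  also have "\<dots> = (\<integral>\<^sup>+x. \<integral>\<^sup>+y. ennreal (normal_density 0 s x * normal_density 0 s y * sqrt (x\<^sup>2 + y\<^sup>2)) \<partial>lborel \<partial>lborel)"
  proof -
    let ?F = "\<lambda>p. ennreal (normal_density 0 s (fst p) * normal_density 0 s (snd p) * sqrt ((fst p)\<^sup>2 + (snd p)\<^sup>2))"
    have "(\<integral>\<^sup>+x. \<integral>\<^sup>+y. ?F (x, y) \<partial>lborel \<partial>lborel) = integral\<^sup>N (lborel \<Otimes>\<^sub>M lborel) ?F"
      by (rule lborel.nn_integral_fst) (unfold normal_density_def, measurable)
    then show ?thesis by simp
  qed
  also have "\<dots> = ennreal (s * sqrt (pi / 2))" by (rule rayleigh_nn[OF s])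
  finally have nn: "(\<integral>\<^sup>+x. ennreal (cmod (Z x)) \<partial>M) = ennreal (s * sqrt (pi / 2))" .
  have "expectation (\<lambda>x. cmod (Z x)) = s * sqrt (pi / 2)"
    using integral_eq_nn_integral[of "\<lambda>x. cmod (Z x)" M] nn s by simp
  also have "s * sqrt (pi / 2) = sqrt pi / 2 * \<rho>"
  proof -
    have "s * sqrt (pi / 2) = \<rho> * sqrt pi / (sqrt 2 * sqrt 2)"
      unfolding s_def by (simp add: real_sqrt_divide)
    then show ?thesis by simp
  qed
  finally show "expectation (\<lambda>x. cmod (Z x)) = sqrt pi / 2 * \<rho>" .
qed



lemma final_limit:
  fixes f g :: "nat \<Rightarrow> complex"
  assumes pos: "Pbs > 0" "Pa > 0" "sigma2 > 0" "sigmav2 > 0"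
    and l1: "(\<lambda>N. (\<Sum>n<N. cmod (f n) * cmod (g n)) / real N) \<longlonglongrightarrow> a"
    and l2: "(\<lambda>N. (\<Sum>n<N. (cmod (f n))\<^sup>2) / real N) \<longlonglongrightarrow> bf"
    and l3: "(\<lambda>N. (\<Sum>n<N. (cmod (g n))\<^sup>2) / real N) \<longlonglongrightarrow> bg"
    and bf: "bf \<ge> 0" and bg: "bg \<ge> 0"
  shows "(\<lambda>N. snr_active Pbs Pa sigma2 sigmav2 f g N / real N)
      \<longlonglongrightarrow> Pa * Pbs * a\<^sup>2 / (Pa * sigmav2 * bf + sigma2 * Pbs * bg + sigma2 * sigmav2)"
proof -
  define S where "S N = (\<Sum>n<N. cmod (f n) * cmod (g n))" for N
  define F where "F N = (\<Sum>n<N. (cmod (f n))\<^sup>2)" for N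
  define G where "G N = (\<Sum>n<N. (cmod (g n))\<^sup>2)" for N
  have den: "Pa * sigmav2 * bf + sigma2 * Pbs * bg + sigma2 * sigmav2 \<noteq> 0"
  proof -
    have "0 \<le> Pa * sigmav2 * bf" using pos bf by simp
    moreover have "0 \<le> sigma2 * Pbs * bg" using pos bg by simp
    moreover have "0 < sigma2 * sigmav2" using pos by simp
    ultimately show ?thesis by linarith
  qed
  have lim: "(\<lambda>N. Pa * Pbs * (S N / real N)\<^sup>2 / (Pa * sigmav2 * (F N / real N) + sigma2 * Pbs * (G N / real N) + sigma2 * sigmav2))
      \<longlonglongrightarrow> Pa * Pbs * a\<^sup>2 / (Pa * sigmav2 * bf + sigma2 * Pbs * bg + sigma2 * sigmav2)"
    unfolding S_def F_def G_def by (intro tendsto_intros l1 l2 l3 den)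
  have ev: "eventually (\<lambda>N. Pa * Pbs * (S N / real N)\<^sup>2 / (Pa * sigmav2 * (F N / real N) + sigma2 * Pbs * (G N / real N) + sigma2 * sigmav2)
      = snr_active Pbs Pa sigma2 sigmav2 f g N / real N) sequentially"
    unfolding eventually_at_top_linorder
  proof (intro exI allI impI)
    fix N :: nat assume N: "N \<ge> 1"
    then have Nr: "real N > 0" by simp
    have F0: "F N \<ge> 0" unfolding F_def by (intro sum_nonneg) auto
    have G0: "G N \<ge> 0" unfolding G_def by (intro sum_nonneg) auto
    have D: "Pa * sigmav2 * F N + sigma2 * Pbs * G N + real N * sigma2 * sigmav2 > 0"
      using pos F0 G0 Nr by (intro add_nonneg_pos) auto
    have "snr_active Pbs Pa sigma2 sigmav2 f g N / real N
        = Pa * Pbs * (S N)\<^sup>2 / (Pa * sigmav2 * F N + sigma2 * Pbs * G N + real N * sigma2 * sigmav2) / real N"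
      using snr_formula[OF pos, of N f g] N unfolding S_def F_def G_def by simp
    also have "\<dots> = Pa * Pbs * (S N / real N)\<^sup>2 / (Pa * sigmav2 * (F N / real N) + sigma2 * Pbs * (G N / real N) + sigma2 * sigmav2)"
    proof -
      have d: "Pa * sigmav2 * (F N / real N) + sigma2 * Pbs * (G N / real N) + sigma2 * sigmav2
          = (Pa * sigmav2 * F N + sigma2 * Pbs * G N + real N * sigma2 * sigmav2) / real N"
        using Nr by (simp add: field_simps)
      show ?thesis unfolding d using Nr D by (simp add: field_simps power2_eq_square)
    qed
    finally show "Pa * Pbs * (S N / real N)\<^sup>2 / (Pa * sigmav2 * (F N / real N) + sigma2 * Pbs * (G N / real N) + sigma2 * sigmav2)
      = snr_active Pbs Pa sigma2 sigmav2 f g N / real N" by simp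
  qed
  show ?thesis by (rule Lim_transform_eventually[OF lim ev])
qed


lemma (in prob_space) indep_prod:
  fixes Z :: "'i \<Rightarrow> 'a \<Rightarrow> complex" and h :: "'i \<Rightarrow> complex \<Rightarrow> real"
  assumes ind: "indep_vars (\<lambda>_. borel) Z UNIV"
    and fin: "finite I" and hm: "\<And>k. k \<in> I \<Longrightarrow> h k \<in> borel_measurable borel"
    and hi: "\<And>k. k \<in> I \<Longrightarrow> integrable M (\<lambda>x. h k (Z k x))"
  shows "integrable M (\<lambda>x. \<Prod>k\<in>I. h k (Z k x))"
    and "expectation (\<lambda>x. \<Prod>k\<in>I. h k (Z k x)) = (\<Prod>k\<in>I. expectation (\<lambda>x. h k (Z k x)))"
proof -
  have ind2: "indep_vars (\<lambda>_. borel) (\<lambda>k x. h k (Z k x)) I"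
    by (rule indep_vars_compose2[OF indep_vars_subset[OF ind subset_UNIV]]) (use hm in auto)
  show "integrable M (\<lambda>x. \<Prod>k\<in>I. h k (Z k x))"
    by (rule indep_vars_integrable[OF fin ind2 hi])
  show "expectation (\<lambda>x. \<Prod>k\<in>I. h k (Z k x)) = (\<Prod>k\<in>I. expectation (\<lambda>x. h k (Z k x)))"
    by (rule indep_vars_lebesgue_integral[OF fin ind2 hi])
qed

theorem lemma2:
  fixes M :: "'a measure"
    and f g :: "nat \<Rightarrow> 'a \<Rightarrow> complex"
    and Pbs Pa sigma2 sigmav2 rho_f rho_g :: real
  assumes "prob_space M"
    and "Pbs > 0" and "Pa > 0" and "sigma2 > 0" and "sigmav2 > 0"
    and "rho_f > 0" and "rho_g > 0"
    and indep: "prob_space.indep_vars M (\<lambda>_. borel)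
                 (\<lambda>i. case i of Inl n \<Rightarrow> f n | Inr n \<Rightarrow> g n) UNIV"
    and gauss_f: "\<And>n. complex_gaussian M (f n) rho_f"
    and gauss_g: "\<And>n. complex_gaussian M (g n) rho_g"
  shows "AE x in M.
           (\<lambda>N. snr_active Pbs Pa sigma2 sigmav2 (\<lambda>n. f n x) (\<lambda>n. g n x) N / real N)
           \<longlonglongrightarrow> Pbs * Pa * pi\<^sup>2 * rho_f\<^sup>2 * rho_g\<^sup>2
               / (16 * (Pa * sigmav2 * rho_f\<^sup>2 + Pbs * sigma2 * rho_g\<^sup>2 + sigma2 * sigmav2))"
proof -
  interpret prob_space M by fact
  have pos: "Pbs > 0" "Pa > 0" "sigma2 > 0" "sigmav2 > 0" by fact+
  have rf: "rho_f > 0" and rg: "rho_g > 0" by fact+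
  define Z where "Z = (\<lambda>i. case i of Inl n \<Rightarrow> f n | Inr n \<Rightarrow> g n)"
  have ind: "indep_vars (\<lambda>_. borel) Z UNIV" using indep unfolding Z_def .
  have Zl: "Z (Inl n) = f n" and Zr: "Z (Inr n) = g n" for n unfolding Z_def by simp_all
  note fm[measurable] = cg_meas[OF gauss_f rf]
  note gm[measurable] = cg_meas[OF gauss_g rg]
  define mf where "mf = sqrt pi / 2 * rho_f"
  define mg where "mg = sqrt pi / 2 * rho_g"
  have Ef1: "expectation (\<lambda>x. cmod (f n x)) = mf" for n unfolding mf_def by (rule cg_E1[OF gauss_f rf])
  have Eg1: "expectation (\<lambda>x. cmod (g n x)) = mg" for n unfolding mg_def by (rule cg_E1[OF gauss_g rg])
  note If1 = cg_int1[OF gauss_f rf] and Ig1 = cg_int1[OF gauss_g rg]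
  note If2 = cg_int2[OF gauss_f rf] and Ig2 = cg_int2[OF gauss_g rg]
  note Ef2 = cg_E2[OF gauss_f rf] and Eg2 = cg_E2[OF gauss_g rg]
  note If4 = cg_int4[OF gauss_f rf] and Ig4 = cg_int4[OF gauss_g rg]
  note Ef4 = cg_E4[OF gauss_f rf] and Eg4 = cg_E4[OF gauss_g rg]
  have pair_sq: "integrable M (\<lambda>x. (cmod (Z a x))\<^sup>2 * (cmod (Z b x))\<^sup>2) \<and>
      expectation (\<lambda>x. (cmod (Z a x))\<^sup>2 * (cmod (Z b x))\<^sup>2) = expectation (\<lambda>x. (cmod (Z a x))\<^sup>2) * expectation (\<lambda>x. (cmod (Z b x))\<^sup>2)"
    if ab: "a \<noteq> b" and ia: "integrable M (\<lambda>x. (cmod (Z a x))\<^sup>2)" and ib: "integrable M (\<lambda>x. (cmod (Z b x))\<^sup>2)" for a b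
  proof -
    have i: "integrable M (\<lambda>x. \<Prod>k\<in>{a, b}. (cmod (Z k x))\<^sup>2)"
      by (rule indep_prod(1)[OF ind]) (use ia ib in auto)
    have e: "expectation (\<lambda>x. \<Prod>k\<in>{a, b}. (cmod (Z k x))\<^sup>2) = (\<Prod>k\<in>{a, b}. expectation (\<lambda>x. (cmod (Z k x))\<^sup>2))"
      by (rule indep_prod(2)[OF ind]) (use ia ib in auto)
    show ?thesis using i e ab by simp
  qed
  have pair_1: "integrable M (\<lambda>x. cmod (Z a x) * cmod (Z b x)) \<and>
      expectation (\<lambda>x. cmod (Z a x) * cmod (Z b x)) = expectation (\<lambda>x. cmod (Z a x)) * expectation (\<lambda>x. cmod (Z b x))"
    if ab: "a \<noteq> b" and ia: "integrable M (\<lambda>x. cmod (Z a x))" and ib: "integrable M (\<lambda>x. cmod (Z b x))" for a b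
  proof -
    have i: "integrable M (\<lambda>x. \<Prod>k\<in>{a, b}. cmod (Z k x))"
      by (rule indep_prod(1)[OF ind]) (use ia ib in auto)
    have e: "expectation (\<lambda>x. \<Prod>k\<in>{a, b}. cmod (Z k x)) = (\<Prod>k\<in>{a, b}. expectation (\<lambda>x. cmod (Z k x)))"
      by (rule indep_prod(2)[OF ind]) (use ia ib in auto)
    show ?thesis using i e ab by simp
  qed
  have quad_1: "integrable M (\<lambda>x. cmod (f i x) * cmod (g i x) * (cmod (f j x) * cmod (g j x))) \<and>
      expectation (\<lambda>x. cmod (f i x) * cmod (g i x) * (cmod (f j x) * cmod (g j x))) = (mf * mg)\<^sup>2"
    if ij: "i \<noteq> j" for i j
  proof -
    let ?I = "{Inl i, Inr i, Inl j, Inr j}"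
    have ints: "integrable M (\<lambda>x. cmod (Z k x))" for k
      by (cases k) (simp_all add: Zl Zr If1 Ig1)
    have i: "integrable M (\<lambda>x. \<Prod>k\<in>?I. cmod (Z k x))"
      by (rule indep_prod(1)[OF ind]) (use ints in auto)
    have e: "expectation (\<lambda>x. \<Prod>k\<in>?I. cmod (Z k x)) = (\<Prod>k\<in>?I. expectation (\<lambda>x. cmod (Z k x)))"
      by (rule indep_prod(2)[OF ind]) (use ints in auto)
    have pe: "(\<Prod>k\<in>?I. cmod (Z k x)) = cmod (f i x) * cmod (g i x) * (cmod (f j x) * cmod (g j x))" for x
      using ij by (simp add: Zl Zr mult_ac)
    have pe2: "(\<Prod>k\<in>?I. expectation (\<lambda>x. cmod (Z k x))) = (mf * mg)\<^sup>2"
      using ij by (simp add: Zl Zr Ef1 Eg1 power2_eq_square mult_ac)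
    show ?thesis using i e unfolding pe pe2 by simp
  qed
  define X1 where "X1 n x = cmod (f n x) * cmod (g n x)" for n x
  define X2 where "X2 n x = (cmod (f n x))\<^sup>2" for n x
  define X3 where "X3 n x = (cmod (g n x))\<^sup>2" for n x
  have fg: "integrable M (\<lambda>x. cmod (f n x) * cmod (g n x)) \<and>
      expectation (\<lambda>x. cmod (f n x) * cmod (g n x)) = mf * mg" for n
    using pair_1[of "Inl n" "Inr n"] by (simp add: Zl Zr If1 Ig1 Ef1 Eg1)
  have fg2: "integrable M (\<lambda>x. (cmod (f n x))\<^sup>2 * (cmod (g n x))\<^sup>2) \<and>
      expectation (\<lambda>x. (cmod (f n x))\<^sup>2 * (cmod (g n x))\<^sup>2) = rho_f\<^sup>2 * rho_g\<^sup>2" for n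
    using pair_sq[of "Inl n" "Inr n"] by (simp add: Zl Zr If2 Ig2 Ef2 Eg2)
  have L1: "AE x in M. (\<lambda>N. (\<Sum>i<N. X1 i x) / real N) \<longlonglongrightarrow> mf * mg"
  proof (rule slln_core)
    show "X1 i \<in> borel_measurable M" for i unfolding X1_def by measurable
    show "0 \<le> X1 i x" for i x unfolding X1_def by simp
    have h1: "integrable M (X1 i)" for i using fg[of i] unfolding X1_def by simp
    have h2: "expectation (X1 i) = mf * mg" for i using fg[of i] unfolding X1_def by simp
    have h3: "integrable M (\<lambda>x. X1 i x * X1 j x)" for i j
    proof (cases "i = j")
      case True
      then show ?thesis using fg2[of i] unfolding X1_def by (simp add: power2_eq_square mult_ac)
    qed (use quad_1[of i j] in \<open>simp add: X1_def\<close>)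
    have h4: "expectation (\<lambda>x. X1 i x * X1 j x) = (mf * mg)\<^sup>2" if "i \<noteq> j" for i j
      using quad_1[OF that] by (simp add: X1_def)
    have h5: "expectation (\<lambda>x. X1 i x * X1 i x) \<le> rho_f\<^sup>2 * rho_g\<^sup>2" for i
      using fg2[of i] by (simp add: X1_def power2_eq_square mult_ac)
    show "integrable M (\<lambda>x. ((\<Sum>i<n. X1 i x) - real n * (mf * mg))\<^sup>2)" for n
      by (rule var_sum_bound(1)[OF h1 h2 h3 h4 h5])
    show "(\<integral>x. ((\<Sum>i<n. X1 i x) - real n * (mf * mg))\<^sup>2 \<partial>M) \<le> real n * (rho_f\<^sup>2 * rho_g\<^sup>2)" for n
      by (rule var_sum_bound(2)[OF h1 h2 h3 h4 h5])
  qed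
  have sqseq: "AE x in M. (\<lambda>N. (\<Sum>i<N. (cmod (W i x))\<^sup>2) / real N) \<longlonglongrightarrow> \<rho>\<^sup>2"
    if gw: "\<And>n. complex_gaussian M (W n) \<rho>" and r: "\<rho> > 0"
      and pw: "\<And>i j. i \<noteq> j \<Longrightarrow> integrable M (\<lambda>x. (cmod (W i x))\<^sup>2 * (cmod (W j x))\<^sup>2) \<and>
         expectation (\<lambda>x. (cmod (W i x))\<^sup>2 * (cmod (W j x))\<^sup>2) = expectation (\<lambda>x. (cmod (W i x))\<^sup>2) * expectation (\<lambda>x. (cmod (W j x))\<^sup>2)"
    for W :: "nat \<Rightarrow> 'a \<Rightarrow> complex" and \<rho>
  proof (rule slln_core)
    note wm[measurable] = cg_meas[OF gw r]
    show "(\<lambda>x. (cmod (W i x))\<^sup>2) \<in> borel_measurable M" for i by measurable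
    show "0 \<le> (cmod (W i x))\<^sup>2" for i x by simp
    have h1: "integrable M (\<lambda>x. (cmod (W i x))\<^sup>2)" for i by (rule cg_int2[OF gw r])
    have h2: "expectation (\<lambda>x. (cmod (W i x))\<^sup>2) = \<rho>\<^sup>2" for i by (rule cg_E2[OF gw r])
    have h3: "integrable M (\<lambda>x. (cmod (W i x))\<^sup>2 * (cmod (W j x))\<^sup>2)" for i j
    proof (cases "i = j")
      case True
      then show ?thesis using cg_int4[OF gw r, of j] by simp
    qed (simp add: pw)
    have h4: "expectation (\<lambda>x. (cmod (W i x))\<^sup>2 * (cmod (W j x))\<^sup>2) = (\<rho>\<^sup>2)\<^sup>2" if "i \<noteq> j" for i j
      using pw[OF that] cg_E2[OF gw r] by (simp add: power2_eq_square)
    have h5: "expectation (\<lambda>x. (cmod (W i x))\<^sup>2 * (cmod (W i x))\<^sup>2) \<le> 3 * \<rho>^4" for i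
      by (rule cg_E4[OF gw r])
    show "integrable M (\<lambda>x. ((\<Sum>i<n. (cmod (W i x))\<^sup>2) - real n * \<rho>\<^sup>2)\<^sup>2)" for n
      by (rule var_sum_bound(1)[OF h1 h2 h3 h4 h5])
    show "(\<integral>x. ((\<Sum>i<n. (cmod (W i x))\<^sup>2) - real n * \<rho>\<^sup>2)\<^sup>2 \<partial>M) \<le> real n * (3 * \<rho>^4)" for n
      by (rule var_sum_bound(2)[OF h1 h2 h3 h4 h5])
  qed
  have L2: "AE x in M. (\<lambda>N. (\<Sum>i<N. (cmod (f i x))\<^sup>2) / real N) \<longlonglongrightarrow> rho_f\<^sup>2"
    by (rule sqseq[OF gauss_f rf]) (use pair_sq[of "Inl i" "Inl j" for i j] in \<open>simp add: Zl If2\<close>)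
  have L3: "AE x in M. (\<lambda>N. (\<Sum>i<N. (cmod (g i x))\<^sup>2) / real N) \<longlonglongrightarrow> rho_g\<^sup>2"
    by (rule sqseq[OF gauss_g rg]) (use pair_sq[of "Inr i" "Inr j" for i j] in \<open>simp add: Zr Ig2\<close>)
  have target: "Pa * Pbs * (mf * mg)\<^sup>2 / (Pa * sigmav2 * rho_f\<^sup>2 + sigma2 * Pbs * rho_g\<^sup>2 + sigma2 * sigmav2)
      = Pbs * Pa * pi\<^sup>2 * rho_f\<^sup>2 * rho_g\<^sup>2
               / (16 * (Pa * sigmav2 * rho_f\<^sup>2 + Pbs * sigma2 * rho_g\<^sup>2 + sigma2 * sigmav2))"
  proof -
    define K where "K = pi\<^sup>2 * rho_f\<^sup>2 * rho_g\<^sup>2"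
    define D where "D = Pa * sigmav2 * rho_f\<^sup>2 + Pbs * sigma2 * rho_g\<^sup>2 + sigma2 * sigmav2"
    have Dp: "D > 0" unfolding D_def using pos
      by (intro add_nonneg_pos add_nonneg_nonneg mult_nonneg_nonneg) auto
    have Q: "(mf * mg)\<^sup>2 = K / 16"
      unfolding mf_def mg_def K_def by (simp add: power_mult_distrib power_divide power2_eq_square)
    have D': "Pa * sigmav2 * rho_f\<^sup>2 + sigma2 * Pbs * rho_g\<^sup>2 + sigma2 * sigmav2 = D"
      unfolding D_def by simp
    have "Pa * Pbs * (K / 16) / D = Pbs * Pa * K / (16 * D)" using Dp by (simp add: field_simps)
    then show ?thesis unfolding Q D' unfolding K_def D_def by (simp add: mult_ac)
  qed
  from L1 L2 L3 show ?thesis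
  proof (eventually_elim)
    case (elim x)
    have "(\<lambda>N. snr_active Pbs Pa sigma2 sigmav2 (\<lambda>n. f n x) (\<lambda>n. g n x) N / real N)
      \<longlonglongrightarrow> Pa * Pbs * (mf * mg)\<^sup>2 / (Pa * sigmav2 * rho_f\<^sup>2 + sigma2 * Pbs * rho_g\<^sup>2 + sigma2 * sigmav2)"
      by (rule final_limit[OF pos]) (use elim in \<open>simp_all add: X1_def\<close>)
    then show ?case unfolding target .
  qed
qed

end
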